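(* Let $p$ be a prime and $X$ a countable set. Every $\tau$-continuous $\mathbb{Z}_p$-linear map $A:\mathbb{Q}_p(X)\to\mathbb{Q}_p(X)$ is continuous with respect to the norm $\|\cdot\|$ on $\mathbb{Q}_p(X)$.
   Context: $\mathbb{Q}_p(X)$ is the set of maps $\xi:X\to\mathbb{Q}_p$ with $|\xi(i)|_p\le1$ for all but finitely many $i$, a $\mathbb{Z}_p$-module under coordinatewise operations, with the topology $\tau$ in which $A\subseteq\mathbb{Q}_p(X)$ is open iff for every finite $P\subseteq X$ the set $A\cap\big(\prod_{i\in P}\mathbb{Q}_p\times\prod_{j\in X\setminus P}\mathbb{Z}_p\big)$ is open in the product topology. The norm is $\|\xi\|=\max_{i\in X}|\xi(i)|_p$. *)

theory Defs
  imports "HOL-Analysis.Analysis" "HOL-Computational_Algebra.Computational_Algebra"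
begin

definition pval_rat :: "nat \<Rightarrow> rat \<Rightarrow> int" where
  "pval_rat p q = (case quotient_of q of (a, b) \<Rightarrow>
      int (multiplicity (int p) a) - int (multiplicity (int p) b))"

definition pabs_rat :: "nat \<Rightarrow> rat \<Rightarrow> real" where
  "pabs_rat p q = (if q = 0 then 0 else real p powr (- real_of_int (pval_rat p q)))"

definition padic_cauchy :: "nat \<Rightarrow> (nat \<Rightarrow> rat) \<Rightarrow> bool" where
  "padic_cauchy p f \<longleftrightarrow>
     (\<forall>e>0. \<exists>N. \<forall>m\<ge>N. \<forall>n\<ge>N. pabs_rat p (f m - f n) < e)"

definition padic_equiv :: "nat \<Rightarrow> (nat \<Rightarrow> rat) \<Rightarrow> (nat \<Rightarrow> rat) \<Rightarrow> bool" where
  "padic_equiv p f g \<longleftrightarrow> (\<lambda>n. pabs_rat p (f n - g n)) \<longlonglongrightarrow> 0"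

type_synonym qp = "(nat \<Rightarrow> rat) set"

definition qp_cls :: "nat \<Rightarrow> (nat \<Rightarrow> rat) \<Rightarrow> qp" where
  "qp_cls p f = {g. padic_cauchy p g \<and> padic_equiv p f g}"

definition Qp :: "nat \<Rightarrow> qp set" where
  "Qp p = {qp_cls p f | f. padic_cauchy p f}"

definition qp_rep :: "qp \<Rightarrow> (nat \<Rightarrow> rat)" where
  "qp_rep x = (SOME f. f \<in> x)"

definition qp_add :: "nat \<Rightarrow> qp \<Rightarrow> qp \<Rightarrow> qp" where
  "qp_add p x y = qp_cls p (\<lambda>n. qp_rep x n + qp_rep y n)"

definition qp_mult :: "nat \<Rightarrow> qp \<Rightarrow> qp \<Rightarrow> qp" where
  "qp_mult p x y = qp_cls p (\<lambda>n. qp_rep x n * qp_rep y n)"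

definition qp_minus :: "nat \<Rightarrow> qp \<Rightarrow> qp \<Rightarrow> qp" where
  "qp_minus p x y = qp_cls p (\<lambda>n. qp_rep x n - qp_rep y n)"

definition qp_abs :: "nat \<Rightarrow> qp \<Rightarrow> real" where
  "qp_abs p x = lim (\<lambda>n. pabs_rat p (qp_rep x n))"

definition Zp :: "nat \<Rightarrow> qp set" where
  "Zp p = {x \<in> Qp p. qp_abs p x \<le> 1}"

definition qp_open :: "nat \<Rightarrow> qp set \<Rightarrow> bool" where
  "qp_open p U \<longleftrightarrow> U \<subseteq> Qp p \<and>
     (\<forall>x\<in>U. \<exists>e>0. \<forall>y\<in>Qp p. qp_abs p (qp_minus p y x) < e \<longrightarrow> y \<in> U)"

definition qp_topology :: "nat \<Rightarrow> qp topology" where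
  "qp_topology p = topology (qp_open p)"

definition QpX :: "nat \<Rightarrow> ('x \<Rightarrow> qp) set" where
  "QpX p = {\<xi>. (\<forall>i. \<xi> i \<in> Qp p) \<and> finite {i. qp_abs p (\<xi> i) > 1}}"

definition qpX_add :: "nat \<Rightarrow> ('x \<Rightarrow> qp) \<Rightarrow> ('x \<Rightarrow> qp) \<Rightarrow> ('x \<Rightarrow> qp)" where
  "qpX_add p \<xi> \<eta> = (\<lambda>i. qp_add p (\<xi> i) (\<eta> i))"

definition qpX_smult :: "nat \<Rightarrow> qp \<Rightarrow> ('x \<Rightarrow> qp) \<Rightarrow> ('x \<Rightarrow> qp)" where
  "qpX_smult p c \<xi> = (\<lambda>i. qp_mult p c (\<xi> i))"

definition qpX_minus :: "nat \<Rightarrow> ('x \<Rightarrow> qp) \<Rightarrow> ('x \<Rightarrow> qp) \<Rightarrow> ('x \<Rightarrow> qp)" where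
  "qpX_minus p \<xi> \<eta> = (\<lambda>i. qp_minus p (\<xi> i) (\<eta> i))"

text \<open>The norm: max over i of |xi(i)|_p (the supremum is attained).\<close>
definition qpX_norm :: "nat \<Rightarrow> ('x \<Rightarrow> qp) \<Rightarrow> real" where
  "qpX_norm p \<xi> = Sup (range (\<lambda>i. qp_abs p (\<xi> i)))"

definition tau_open :: "nat \<Rightarrow> ('x \<Rightarrow> qp) set \<Rightarrow> bool" where
  "tau_open p A \<longleftrightarrow> A \<subseteq> QpX p \<and>
     (\<forall>P. finite P \<longrightarrow>
        openin (product_topology
                  (\<lambda>i. if i \<in> P then qp_topology p else subtopology (qp_topology p) (Zp p)) UNIV)
               (A \<inter> {\<xi>. \<forall>j. j \<notin> P \<longrightarrow> \<xi> j \<in> Zp p}))"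

definition tau_continuous :: "nat \<Rightarrow> (('x \<Rightarrow> qp) \<Rightarrow> ('x \<Rightarrow> qp)) \<Rightarrow> bool" where
  "tau_continuous p A \<longleftrightarrow> (\<forall>\<xi>\<in>QpX p. A \<xi> \<in> QpX p) \<and>
     (\<forall>U. tau_open p U \<longrightarrow> tau_open p {\<xi> \<in> QpX p. A \<xi> \<in> U})"

definition Zp_linear :: "nat \<Rightarrow> (('x \<Rightarrow> qp) \<Rightarrow> ('x \<Rightarrow> qp)) \<Rightarrow> bool" where
  "Zp_linear p A \<longleftrightarrow> (\<forall>\<xi>\<in>QpX p. A \<xi> \<in> QpX p) \<and>
     (\<forall>\<xi>\<in>QpX p. \<forall>\<eta>\<in>QpX p. A (qpX_add p \<xi> \<eta>) = qpX_add p (A \<xi>) (A \<eta>)) \<and>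
     (\<forall>c\<in>Zp p. \<forall>\<xi>\<in>QpX p. A (qpX_smult p c \<xi>) = qpX_smult p c (A \<xi>))"

definition norm_continuous :: "nat \<Rightarrow> (('x \<Rightarrow> qp) \<Rightarrow> ('x \<Rightarrow> qp)) \<Rightarrow> bool" where
  "norm_continuous p A \<longleftrightarrow> (\<forall>\<xi>\<in>QpX p. \<forall>e>0. \<exists>d>0. \<forall>\<eta>\<in>QpX p.
      qpX_norm p (qpX_minus p \<eta> \<xi>) < d \<longrightarrow> qpX_norm p (qpX_minus p (A \<eta>) (A \<xi>)) < e)"

end

theory Submission
  imports Defs
begin


lemma prime_int_p: "prime p \<Longrightarrow> prime (int p)"
  by simp

lemma pval_frac:
  assumes "prime p" "r \<noteq> 0" "s \<noteq> 0"
  shows "pval_rat p (of_int r / of_int s) = int (multiplicity (int p) r) - int (multiplicity (int p) s)"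
proof -
  obtain a b where ab: "quotient_of (of_int r / of_int s) = (a, b)" by (cases "quotient_of (of_int r / of_int s)") auto
  have b0: "b > 0" using quotient_of_denom_pos[OF ab] .
  have eq: "(of_int r / of_int s :: rat) = of_int a / of_int b" using quotient_of_div[OF ab] .
  have a0: "a \<noteq> 0" using eq assms b0 by auto
  have "of_int (a * s) = (of_int (r * b) :: rat)"
    using eq assms b0 by (simp add: field_simps)
  hence "a * s = r * b" by (simp only: of_int_eq_iff)
  hence "multiplicity (int p) (a * s) = multiplicity (int p) (r * b)" by simp
  moreover have "prime_elem (int p)" using assms(1) by auto
  ultimately have "multiplicity (int p) a + multiplicity (int p) s = multiplicity (int p) r + multiplicity (int p) b"
    using prime_elem_multiplicity_mult_distrib a0 b0 assms by (metis less_irrefl)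
  thus ?thesis unfolding pval_rat_def ab by simp
qed

lemma rat_as_frac: obtains r s where "r \<noteq> 0" "s \<noteq> 0" "q = (of_int r / of_int s :: rat) \<or> q = 0"
proof -
  obtain a b where ab: "quotient_of q = (a, b)" by (cases "quotient_of q") auto
  show ?thesis
  proof (cases "q = 0")
    case True then show ?thesis using that[of 1 1] by auto
  next
    case False
    have "b > 0" using quotient_of_denom_pos[OF ab] .
    moreover have "q = of_int a / of_int b" using quotient_of_div[OF ab] .
    ultimately show ?thesis using that[of a b] False by auto
  qed
qed

lemma pabs_nonneg: "pabs_rat p q \<ge> 0"
  unfolding pabs_rat_def by auto

lemma pabs_zero[simp]: "pabs_rat p 0 = 0"
  unfolding pabs_rat_def by auto

lemma pabs_pos: "prime p \<Longrightarrow> q \<noteq> 0 \<Longrightarrow> pabs_rat p q > 0"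
  unfolding pabs_rat_def using prime_gt_0_nat by auto

lemma pabs_mult:
  assumes "prime p" shows "pabs_rat p (x * y) = pabs_rat p x * pabs_rat p y"
proof (cases "x = 0 \<or> y = 0")
  case True then show ?thesis by auto
next
  case False
  obtain r s where rs: "r \<noteq> 0" "s \<noteq> 0" "x = of_int r / of_int s" using rat_as_frac[of x] False by metis
  obtain r' s' where rs': "r' \<noteq> 0" "s' \<noteq> 0" "y = of_int r' / of_int s'" using rat_as_frac[of y] False by metis
  have xy: "x * y = of_int (r * r') / of_int (s * s')" using rs rs' by simp
  have pe: "prime_elem (int p)" using assms by auto
  have "pval_rat p (x * y) = int (multiplicity (int p) (r * r')) - int (multiplicity (int p) (s * s'))"
    unfolding xy using pval_frac[OF assms, of "r * r'" "s * s'"] rs rs' by simp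
  also have "\<dots> = pval_rat p x + pval_rat p y"
    using pval_frac[OF assms, of r s] pval_frac[OF assms, of r' s'] rs rs'
      prime_elem_multiplicity_mult_distrib[OF pe] by simp
  finally have "pval_rat p (x * y) = pval_rat p x + pval_rat p y" .
  moreover have "x * y \<noteq> 0" using False by auto
  ultimately show ?thesis using False unfolding pabs_rat_def
    by (simp add: powr_add[symmetric] algebra_simps)
qed

lemma pabs_uminus:
  assumes "prime p" shows "pabs_rat p (- x) = pabs_rat p x"
proof (cases "x = 0")
  case True then show ?thesis by auto
next
  case False
  obtain r s where rs: "r \<noteq> 0" "s \<noteq> 0" "x = of_int r / of_int s" using rat_as_frac[of x] False by metis
  have "- x = of_int (- r) / of_int s" using rs by simp
  hence "pval_rat p (- x) = pval_rat p x" using rs pval_frac[OF assms, of "-r" s] pval_frac[OF assms, of r s] by simp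
  then show ?thesis unfolding pabs_rat_def by simp
qed

lemma mult_add_ge:
  fixes x y :: int
  assumes "prime p" "x + y \<noteq> 0"
  shows "multiplicity (int p) (x + y) \<ge> min (multiplicity (int p) x) (multiplicity (int p) y)"
proof -
  let ?k = "min (multiplicity (int p) x) (multiplicity (int p) y)"
  have "int p ^ ?k dvd x" by (rule multiplicity_dvd') simp
  moreover have "int p ^ ?k dvd y" by (rule multiplicity_dvd') simp
  ultimately have "int p ^ ?k dvd x + y" by simp
  moreover have "\<not> is_unit (int p)" using assms(1) by (metis prime_int_p not_prime_unit)
  ultimately show ?thesis using multiplicity_geI assms by blast
qed

lemma pabs_ultra:
  assumes "prime p" shows "pabs_rat p (x + y) \<le> max (pabs_rat p x) (pabs_rat p y)"
proof (cases "x = 0 \<or> y = 0 \<or> x + y = 0")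
  case True then show ?thesis using pabs_nonneg[of p x] pabs_nonneg[of p y] by (auto simp: le_max_iff_disj)
next
  case False
  obtain r s where rs: "r \<noteq> 0" "s \<noteq> 0" "x = of_int r / of_int s" using rat_as_frac[of x] False by metis
  obtain r' s' where rs': "r' \<noteq> 0" "s' \<noteq> 0" "y = of_int r' / of_int s'" using rat_as_frac[of y] False by metis
  have x2: "x = of_int (r * s') / of_int (s * s')" using rs rs' by simp
  have y2: "y = of_int (r' * s) / of_int (s * s')" using rs rs' by simp
  have xy: "x + y = of_int (r * s' + r' * s) / of_int (s * s')" using rs rs' by (simp add: field_simps)
  have nz: "r * s' + r' * s \<noteq> 0" using False xy by (metis div_0 of_int_0)
  have px: "pval_rat p x = int (multiplicity (int p) (r * s')) - int (multiplicity (int p) (s * s'))"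
    using pval_frac[OF assms, of "r * s'" "s * s'"] x2 rs rs' by simp
  have py: "pval_rat p y = int (multiplicity (int p) (r' * s)) - int (multiplicity (int p) (s * s'))"
    using pval_frac[OF assms, of "r' * s" "s * s'"] y2 rs rs' by simp
  have pxy: "pval_rat p (x + y) = int (multiplicity (int p) (r * s' + r' * s)) - int (multiplicity (int p) (s * s'))"
    using pval_frac[OF assms, of "r * s' + r' * s" "s * s'"] xy rs rs' nz by simp
  have "pval_rat p (x + y) \<ge> min (pval_rat p x) (pval_rat p y)"
    using mult_add_ge[OF assms nz] px py pxy by linarith
  hence "- real_of_int (pval_rat p (x + y)) \<le> max (- real_of_int (pval_rat p x)) (- real_of_int (pval_rat p y))"
    by linarith
  moreover have "real p \<ge> 1" using assms prime_ge_1_nat by auto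
  ultimately have "real p powr (- real_of_int (pval_rat p (x + y))) \<le> max (real p powr (- real_of_int (pval_rat p x))) (real p powr (- real_of_int (pval_rat p y)))"
    by (smt (verit) powr_mono)
  thus ?thesis using False unfolding pabs_rat_def by simp
qed

lemma pabs_tri: "prime p \<Longrightarrow> pabs_rat p (x + y) \<le> pabs_rat p x + pabs_rat p y"
  using pabs_ultra[of p x y] pabs_nonneg[of p] by (smt (verit))

lemma pabs_diff_tri: "prime p \<Longrightarrow> pabs_rat p (x - z) \<le> pabs_rat p (x - y) + pabs_rat p (y - z)"
  using pabs_tri[of p "x - y" "y - z"] by simp

lemma pabs_minus_commute: "prime p \<Longrightarrow> pabs_rat p (x - y) = pabs_rat p (y - x)"
  using pabs_uminus[of p "x - y"] by simp

lemma pabs_rev_tri: "prime p \<Longrightarrow> \<bar>pabs_rat p x - pabs_rat p y\<bar> \<le> pabs_rat p (x - y)"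
  using pabs_tri[of p "x - y" y] pabs_tri[of p "y - x" x] pabs_minus_commute[of p x y] by auto

lemma pabs_one: "prime p \<Longrightarrow> pabs_rat p 1 = 1"
  unfolding pabs_rat_def pval_rat_def using prime_gt_0_nat[of p] by (simp add: quotient_of_int[of 1, simplified])

lemma pabs_ppow: assumes "prime p" shows "pabs_rat p (of_nat p ^ n) = inverse (real p ^ n)"
proof -
  have "(of_nat p ^ n :: rat) = of_int (int p ^ n) / of_int 1" by simp
  hence "pval_rat p (of_nat p ^ n) = int n"
    using pval_frac[OF assms, of "int p ^ n" 1] assms multiplicity_same_power[of "int p" n]
      prime_gt_1_nat[OF assms] by simp
  moreover have "p > 0" using assms prime_gt_0_nat by auto
  ultimately show ?thesis unfolding pabs_rat_def by (simp add: powr_minus powr_realpow)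
qed


section \<open>Sequences\<close>

lemma cauchy_bounded:
  assumes "prime p" "padic_cauchy p f"
  shows "\<exists>B\<ge>0. \<forall>n. pabs_rat p (f n) \<le> B"
proof -
  obtain N where N: "\<forall>m\<ge>N. \<forall>n\<ge>N. pabs_rat p (f m - f n) < 1"
    using assms(2) unfolding padic_cauchy_def by (meson zero_less_one)
  define M where "M = Max ((\<lambda>n. pabs_rat p (f n)) ` {..N})"
  have M: "n \<le> N \<Longrightarrow> pabs_rat p (f n) \<le> M" for n unfolding M_def by (intro Max_ge) auto
  have "pabs_rat p (f n) \<le> M + 1" for n
  proof (cases "n \<le> N")
    case True then show ?thesis using M[of n] by simp
  next
    case False
    have "pabs_rat p (f n) \<le> pabs_rat p (f n - f N) + pabs_rat p (f N)"
      using pabs_tri[OF assms(1), of "f n - f N" "f N"] by simp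
    also have "\<dots> \<le> 1 + M" using N[rule_format, of n N] False M[of N] by simp
    finally show ?thesis by simp
  qed
  moreover have "M + 1 \<ge> 0" using M[of 0] pabs_nonneg[of p "f 0"] by simp
  ultimately show ?thesis by blast
qed

lemma cauchy_comb:
  assumes "padic_cauchy p f" "padic_cauchy p g" "C \<ge> 0"
    and "\<And>m n. pabs_rat p (h m - h n) \<le> C * pabs_rat p (f m - f n) + C * pabs_rat p (g m - g n)"
  shows "padic_cauchy p h"
  unfolding padic_cauchy_def
proof (intro allI impI)
  fix e :: real assume e: "e > 0"
  define e' where "e' = e / (2 * (C + 1))"
  have e': "e' > 0" using e assms(3) unfolding e'_def by simp
  obtain N1 where N1: "\<forall>m\<ge>N1. \<forall>n\<ge>N1. pabs_rat p (f m - f n) < e'"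
    using assms(1) e' unfolding padic_cauchy_def by blast
  obtain N2 where N2: "\<forall>m\<ge>N2. \<forall>n\<ge>N2. pabs_rat p (g m - g n) < e'"
    using assms(2) e' unfolding padic_cauchy_def by blast
  have "pabs_rat p (h m - h n) < e" if "m \<ge> max N1 N2" "n \<ge> max N1 N2" for m n
  proof -
    have "pabs_rat p (f m - f n) < e'" using N1 that by auto
    hence a: "C * pabs_rat p (f m - f n) \<le> C * e'"
      using assms(3) by (intro mult_left_mono) auto
    have "pabs_rat p (g m - g n) < e'" using N2 that by auto
    hence b: "C * pabs_rat p (g m - g n) \<le> C * e'"
      using assms(3) by (intro mult_left_mono) auto
    have ee: "e = e' * (2 * (C + 1))" unfolding e'_def using assms(3) by simp
    have "C * e' + C * e' < e' * (2 * (C + 1))" using e' by (simp add: algebra_simps)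
    hence "C * e' + C * e' < e" using ee by simp
    thus ?thesis using assms(4)[of m n] a b by linarith
  qed
  thus "\<exists>N. \<forall>m\<ge>N. \<forall>n\<ge>N. pabs_rat p (h m - h n) < e" by blast
qed

lemma equiv_comb:
  assumes "padic_equiv p f f'" "padic_equiv p g g'" "C \<ge> 0"
    and "\<And>n. pabs_rat p (h n - h' n) \<le> C * pabs_rat p (f n - f' n) + C * pabs_rat p (g n - g' n)"
  shows "padic_equiv p h h'"
  unfolding padic_equiv_def
proof (rule Lim_null_comparison)
  show "\<forall>\<^sub>F n in sequentially. norm (pabs_rat p (h n - h' n)) \<le> C * pabs_rat p (f n - f' n) + C * pabs_rat p (g n - g' n)"
    using assms(4) pabs_nonneg by simp
  have "(\<lambda>n. C * pabs_rat p (f n - f' n) + C * pabs_rat p (g n - g' n)) \<longlonglongrightarrow> C * 0 + C * 0"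
    using assms(1,2) unfolding padic_equiv_def by (intro tendsto_intros)
  thus "(\<lambda>n. C * pabs_rat p (f n - f' n) + C * pabs_rat p (g n - g' n)) \<longlonglongrightarrow> 0" by simp
qed

lemma equiv_refl: "padic_equiv p f f"
  unfolding padic_equiv_def by simp

lemma equiv_sym: "prime p \<Longrightarrow> padic_equiv p f g \<Longrightarrow> padic_equiv p g f"
  unfolding padic_equiv_def using pabs_minus_commute[of p] by simp

lemma equiv_trans: "prime p \<Longrightarrow> padic_equiv p f g \<Longrightarrow> padic_equiv p g h \<Longrightarrow> padic_equiv p f h"
  by (rule equiv_comb[where f=f and f'=g and g=g and g'=h and C=1]) (simp_all add: pabs_diff_tri)

lemma cauchy_add:
  assumes pp: "prime p" and f: "padic_cauchy p f" and g: "padic_cauchy p g"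
  shows "padic_cauchy p (\<lambda>n. f n + g n)"
proof (rule cauchy_comb[OF f g, where C=1])
  fix m n
  have "pabs_rat p (f m + g m - (f n + g n)) = pabs_rat p ((f m - f n) + (g m - g n))" by (simp add: algebra_simps)
  thus "pabs_rat p (f m + g m - (f n + g n)) \<le> 1 * pabs_rat p (f m - f n) + 1 * pabs_rat p (g m - g n)"
    using pabs_tri[OF pp, of "f m - f n" "g m - g n"] by linarith
qed simp

lemma cauchy_diff:
  assumes pp: "prime p" and f: "padic_cauchy p f" and g: "padic_cauchy p g"
  shows "padic_cauchy p (\<lambda>n. f n - g n)"
proof (rule cauchy_comb[OF f g, where C=1])
  fix m n
  have "pabs_rat p (f m - g m - (f n - g n)) = pabs_rat p ((f m - f n) + (g n - g m))" by (simp add: algebra_simps)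
  thus "pabs_rat p (f m - g m - (f n - g n)) \<le> 1 * pabs_rat p (f m - f n) + 1 * pabs_rat p (g m - g n)"
    using pabs_tri[OF pp, of "f m - f n" "g n - g m"] pabs_minus_commute[OF pp, of "g n" "g m"] by linarith
qed simp

lemma mult_bound:
  assumes "prime p" "B \<ge> 0" "\<forall>n. pabs_rat p (a n) \<le> B" "\<forall>n. pabs_rat p (d n) \<le> B"
  shows "pabs_rat p (a m * b m - c n * d n) \<le> B * pabs_rat p (b m - d n) + B * pabs_rat p (a m - c n)"
proof -
  have "a m * b m - c n * d n = a m * (b m - d n) + (a m - c n) * d n" by (simp add: algebra_simps)
  hence "pabs_rat p (a m * b m - c n * d n) \<le> pabs_rat p (a m) * pabs_rat p (b m - d n) + pabs_rat p (a m - c n) * pabs_rat p (d n)"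
    using pabs_tri[OF assms(1)] pabs_mult[OF assms(1)] by metis
  also have "\<dots> \<le> B * pabs_rat p (b m - d n) + pabs_rat p (a m - c n) * B"
    using assms pabs_nonneg by (intro add_mono mult_mono) auto
  finally show ?thesis by (simp add: algebra_simps)
qed

lemma bound2:
  assumes "prime p" "padic_cauchy p f" "padic_cauchy p g"
  obtains B where "B \<ge> 0" "\<forall>n. pabs_rat p (f n) \<le> B" "\<forall>n. pabs_rat p (g n) \<le> B"
proof -
  obtain B1 where B1: "B1 \<ge> 0" "\<forall>n. pabs_rat p (f n) \<le> B1" using cauchy_bounded assms by blast
  obtain B2 where B2: "B2 \<ge> 0" "\<forall>n. pabs_rat p (g n) \<le> B2" using cauchy_bounded assms by blast
  have "\<forall>n. pabs_rat p (f n) \<le> max B1 B2" using B1 by (meson max.coboundedI1)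
  moreover have "\<forall>n. pabs_rat p (g n) \<le> max B1 B2" using B2 by (meson max.coboundedI2)
  moreover have "max B1 B2 \<ge> 0" using B1 by simp
  ultimately show ?thesis using that by blast
qed

lemma cauchy_mult: "prime p \<Longrightarrow> padic_cauchy p f \<Longrightarrow> padic_cauchy p g \<Longrightarrow> padic_cauchy p (\<lambda>n. f n * g n)"
proof -
  assume a: "prime p" "padic_cauchy p f" "padic_cauchy p g"
  obtain B where B: "B \<ge> 0" "\<forall>n. pabs_rat p (f n) \<le> B" "\<forall>n. pabs_rat p (g n) \<le> B" using bound2 a by blast
  show ?thesis
    by (rule cauchy_comb[OF a(3) a(2) B(1)]) (rule mult_bound[OF a(1) B(1) B(2,3)])
qed

lemma equiv_add:
  assumes pp: "prime p" and f: "padic_equiv p f f'" and g: "padic_equiv p g g'"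
  shows "padic_equiv p (\<lambda>n. f n + g n) (\<lambda>n. f' n + g' n)"
proof (rule equiv_comb[OF f g, where C=1])
  fix n
  have "pabs_rat p (f n + g n - (f' n + g' n)) = pabs_rat p ((f n - f' n) + (g n - g' n))" by (simp add: algebra_simps)
  thus "pabs_rat p (f n + g n - (f' n + g' n)) \<le> 1 * pabs_rat p (f n - f' n) + 1 * pabs_rat p (g n - g' n)"
    using pabs_tri[OF pp, of "f n - f' n" "g n - g' n"] by linarith
qed simp

lemma equiv_diff:
  assumes pp: "prime p" and f: "padic_equiv p f f'" and g: "padic_equiv p g g'"
  shows "padic_equiv p (\<lambda>n. f n - g n) (\<lambda>n. f' n - g' n)"
proof (rule equiv_comb[OF f g, where C=1])
  fix n
  have "pabs_rat p (f n - g n - (f' n - g' n)) = pabs_rat p ((f n - f' n) + (g' n - g n))" by (simp add: algebra_simps)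
  thus "pabs_rat p (f n - g n - (f' n - g' n)) \<le> 1 * pabs_rat p (f n - f' n) + 1 * pabs_rat p (g n - g' n)"
    using pabs_tri[OF pp, of "f n - f' n" "g' n - g n"] pabs_minus_commute[OF pp, of "g' n" "g n"] by linarith
qed simp

lemma equiv_mult:
  assumes "prime p" "padic_cauchy p f" "padic_cauchy p g'" "padic_equiv p f f'" "padic_equiv p g g'"
  shows "padic_equiv p (\<lambda>n. f n * g n) (\<lambda>n. f' n * g' n)"
proof -
  obtain B where B: "B \<ge> 0" "\<forall>n. pabs_rat p (f n) \<le> B" "\<forall>n. pabs_rat p (g' n) \<le> B" using bound2 assms by blast
  show ?thesis
    by (rule equiv_comb[OF assms(5) assms(4) B(1)]) (rule mult_bound[OF assms(1) B(1) B(2,3)])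
qed

lemma cls_mem: "padic_cauchy p f \<Longrightarrow> f \<in> qp_cls p f"
  unfolding qp_cls_def by (simp add: equiv_refl)

lemma cls_in_Qp: "padic_cauchy p f \<Longrightarrow> qp_cls p f \<in> Qp p"
  unfolding Qp_def by blast

lemma rep_cls: "padic_cauchy p f \<Longrightarrow> padic_cauchy p (qp_rep (qp_cls p f)) \<and> padic_equiv p f (qp_rep (qp_cls p f))"
proof -
  assume "padic_cauchy p f"
  hence "qp_rep (qp_cls p f) \<in> qp_cls p f" unfolding qp_rep_def by (rule someI[of "\<lambda>g. g \<in> qp_cls p f", OF cls_mem])
  thus ?thesis unfolding qp_cls_def by simp
qed

lemma cls_eq: "prime p \<Longrightarrow> padic_equiv p f g \<Longrightarrow> qp_cls p f = qp_cls p g"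
  unfolding qp_cls_def using equiv_trans equiv_sym by blast

lemma Qp_rep: "prime p \<Longrightarrow> x \<in> Qp p \<Longrightarrow> padic_cauchy p (qp_rep x) \<and> x = qp_cls p (qp_rep x)"
proof -
  assume pp: "prime p" and "x \<in> Qp p"
  then obtain f where f: "padic_cauchy p f" "x = qp_cls p f" unfolding Qp_def by blast
  hence r: "qp_rep x \<in> qp_cls p f" unfolding qp_rep_def by (metis someI cls_mem)
  hence "padic_cauchy p (qp_rep x)" "padic_equiv p f (qp_rep x)" unfolding qp_cls_def by simp_all
  thus ?thesis using cls_eq[OF pp] f by metis
qed

lemma add_cls: "prime p \<Longrightarrow> padic_cauchy p f \<Longrightarrow> padic_cauchy p g \<Longrightarrow> qp_add p (qp_cls p f) (qp_cls p g) = qp_cls p (\<lambda>n. f n + g n)"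
proof -
  assume pp: "prime p" and f: "padic_cauchy p f" and g: "padic_cauchy p g"
  define r1 where "r1 = qp_rep (qp_cls p f)"
  define r2 where "r2 = qp_rep (qp_cls p g)"
  have r1: "padic_cauchy p r1" "padic_equiv p f r1" using rep_cls[OF f] unfolding r1_def by auto
  have r2: "padic_cauchy p r2" "padic_equiv p g r2" using rep_cls[OF g] unfolding r2_def by auto
  have "padic_equiv p (\<lambda>n. r1 n + r2 n) (\<lambda>n. f n + g n)"
    by (rule equiv_add[OF pp equiv_sym[OF pp r1(2)] equiv_sym[OF pp r2(2)]])
  thus ?thesis unfolding qp_add_def r1_def[symmetric] r2_def[symmetric] by (rule cls_eq[OF pp])
qed

lemma minus_cls: "prime p \<Longrightarrow> padic_cauchy p f \<Longrightarrow> padic_cauchy p g \<Longrightarrow> qp_minus p (qp_cls p f) (qp_cls p g) = qp_cls p (\<lambda>n. f n - g n)"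
proof -
  assume pp: "prime p" and f: "padic_cauchy p f" and g: "padic_cauchy p g"
  define r1 where "r1 = qp_rep (qp_cls p f)"
  define r2 where "r2 = qp_rep (qp_cls p g)"
  have r1: "padic_cauchy p r1" "padic_equiv p f r1" using rep_cls[OF f] unfolding r1_def by auto
  have r2: "padic_cauchy p r2" "padic_equiv p g r2" using rep_cls[OF g] unfolding r2_def by auto
  have "padic_equiv p (\<lambda>n. r1 n - r2 n) (\<lambda>n. f n - g n)"
    by (rule equiv_diff[OF pp equiv_sym[OF pp r1(2)] equiv_sym[OF pp r2(2)]])
  thus ?thesis unfolding qp_minus_def r1_def[symmetric] r2_def[symmetric] by (rule cls_eq[OF pp])
qed

lemma mult_cls: "prime p \<Longrightarrow> padic_cauchy p f \<Longrightarrow> padic_cauchy p g \<Longrightarrow> qp_mult p (qp_cls p f) (qp_cls p g) = qp_cls p (\<lambda>n. f n * g n)"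
proof -
  assume pp: "prime p" and f: "padic_cauchy p f" and g: "padic_cauchy p g"
  define r1 where "r1 = qp_rep (qp_cls p f)"
  define r2 where "r2 = qp_rep (qp_cls p g)"
  have r1: "padic_cauchy p r1" "padic_equiv p f r1" using rep_cls[OF f] unfolding r1_def by auto
  have r2: "padic_cauchy p r2" "padic_equiv p g r2" using rep_cls[OF g] unfolding r2_def by auto
  have "padic_equiv p (\<lambda>n. r1 n * r2 n) (\<lambda>n. f n * g n)"
    by (rule equiv_mult[OF pp r1(1) g equiv_sym[OF pp r1(2)] equiv_sym[OF pp r2(2)]])
  thus ?thesis unfolding qp_mult_def r1_def[symmetric] r2_def[symmetric] by (rule cls_eq[OF pp])
qed

lemma abs_cls:
  assumes pp: "prime p" and f: "padic_cauchy p f"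
  shows "(\<lambda>n. pabs_rat p (f n)) \<longlonglongrightarrow> qp_abs p (qp_cls p f)"
proof -
  define r where "r = qp_rep (qp_cls p f)"
  have r: "padic_cauchy p r" "padic_equiv p f r" using rep_cls[OF f] unfolding r_def by auto
  have "Cauchy (\<lambda>n. pabs_rat p (r n))"
  proof (rule CauchyI)
    fix e :: real assume "e > 0"
    then obtain M where M: "\<forall>m\<ge>M. \<forall>n\<ge>M. pabs_rat p (r m - r n) < e" using r(1) unfolding padic_cauchy_def by blast
    show "\<exists>M. \<forall>m\<ge>M. \<forall>n\<ge>M. norm (pabs_rat p (r m) - pabs_rat p (r n)) < e"
      using M pabs_rev_tri[OF pp] by (metis order.strict_trans1 real_norm_def)
  qed
  hence L: "(\<lambda>n. pabs_rat p (r n)) \<longlonglongrightarrow> qp_abs p (qp_cls p f)"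
    unfolding qp_abs_def r_def[symmetric] using Cauchy_convergent_iff convergent_LIMSEQ_iff by blast
  have "(\<lambda>n. pabs_rat p (f n) - pabs_rat p (r n)) \<longlonglongrightarrow> 0"
  proof (rule Lim_null_comparison)
    show "\<forall>\<^sub>F n in sequentially. norm (pabs_rat p (f n) - pabs_rat p (r n)) \<le> pabs_rat p (f n - r n)"
      using pabs_rev_tri[OF pp] by simp
    show "(\<lambda>n. pabs_rat p (f n - r n)) \<longlonglongrightarrow> 0" using r(2) unfolding padic_equiv_def .
  qed
  thus ?thesis using Lim_transform[OF L, of "\<lambda>n. pabs_rat p (f n)"] by simp
qed



section \<open>Algebra on Qp\<close>

lemma Qp_obtain:
  assumes "prime p" "x \<in> Qp p"
  obtains f where "padic_cauchy p f" "x = qp_cls p f"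
  using Qp_rep[OF assms] by blast

lemma cauchy_const: "padic_cauchy p (\<lambda>n. c)"
  unfolding padic_cauchy_def by auto

lemma add_closed: "prime p \<Longrightarrow> x \<in> Qp p \<Longrightarrow> y \<in> Qp p \<Longrightarrow> qp_add p x y \<in> Qp p"
  unfolding qp_add_def by (intro cls_in_Qp cauchy_add) (auto dest: Qp_rep)

lemma minus_closed: "prime p \<Longrightarrow> x \<in> Qp p \<Longrightarrow> y \<in> Qp p \<Longrightarrow> qp_minus p x y \<in> Qp p"
  unfolding qp_minus_def by (intro cls_in_Qp cauchy_diff) (auto dest: Qp_rep)

lemma mult_closed: "prime p \<Longrightarrow> x \<in> Qp p \<Longrightarrow> y \<in> Qp p \<Longrightarrow> qp_mult p x y \<in> Qp p"
  unfolding qp_mult_def by (intro cls_in_Qp cauchy_mult) (auto dest: Qp_rep)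

lemma abs_nonneg: assumes "prime p" "x \<in> Qp p" shows "qp_abs p x \<ge> 0"
proof -
  obtain f where f: "padic_cauchy p f" "x = qp_cls p f" using Qp_obtain assms by blast
  show ?thesis unfolding f(2) by (rule LIMSEQ_le_const[OF abs_cls[OF assms(1) f(1)]]) (simp add: pabs_nonneg)
qed

lemma abs_const: "prime p \<Longrightarrow> qp_abs p (qp_cls p (\<lambda>n. c)) = pabs_rat p c"
  using abs_cls[OF _ cauchy_const, of p c] LIMSEQ_unique[OF _ tendsto_const] by blast

lemma abs_mult: assumes "prime p" "x \<in> Qp p" "y \<in> Qp p"
  shows "qp_abs p (qp_mult p x y) = qp_abs p x * qp_abs p y"
proof -
  obtain f where f: "padic_cauchy p f" "x = qp_cls p f" using Qp_obtain assms by blast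
  obtain g where g: "padic_cauchy p g" "y = qp_cls p g" using Qp_obtain assms by blast
  have "(\<lambda>n. pabs_rat p (f n * g n)) \<longlonglongrightarrow> qp_abs p (qp_cls p (\<lambda>n. f n * g n))"
    by (rule abs_cls[OF assms(1) cauchy_mult[OF assms(1) f(1) g(1)]])
  moreover have "(\<lambda>n. pabs_rat p (f n * g n)) \<longlonglongrightarrow> qp_abs p x * qp_abs p y"
    unfolding pabs_mult[OF assms(1)] f(2) g(2)
    by (intro tendsto_mult abs_cls[OF assms(1)] f g)
  ultimately show ?thesis unfolding f(2) g(2) mult_cls[OF assms(1) f(1) g(1)]
    using LIMSEQ_unique by blast
qed

lemma abs_add: assumes "prime p" "x \<in> Qp p" "y \<in> Qp p"
  shows "qp_abs p (qp_add p x y) \<le> max (qp_abs p x) (qp_abs p y)"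
proof -
  obtain f where f: "padic_cauchy p f" "x = qp_cls p f" using Qp_obtain assms by blast
  obtain g where g: "padic_cauchy p g" "y = qp_cls p g" using Qp_obtain assms by blast
  have "(\<lambda>n. max (pabs_rat p (f n)) (pabs_rat p (g n))) \<longlonglongrightarrow> max (qp_abs p x) (qp_abs p y)"
    unfolding f(2) g(2) by (intro tendsto_max abs_cls[OF assms(1)] f g)
  show ?thesis unfolding f(2) g(2) add_cls[OF assms(1) f(1) g(1)]
    by (rule LIMSEQ_le[OF abs_cls[OF assms(1) cauchy_add[OF assms(1) f(1) g(1)]]])
       (use \<open>(\<lambda>n. max _ _) \<longlonglongrightarrow> _\<close> f g pabs_ultra[OF assms(1)] in auto)
qed

lemma abs_minus: assumes "prime p" "x \<in> Qp p" "y \<in> Qp p"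
  shows "qp_abs p (qp_minus p x y) \<le> max (qp_abs p x) (qp_abs p y)"
proof -
  obtain f where f: "padic_cauchy p f" "x = qp_cls p f" using Qp_obtain assms by blast
  obtain g where g: "padic_cauchy p g" "y = qp_cls p g" using Qp_obtain assms by blast
  have L: "(\<lambda>n. max (pabs_rat p (f n)) (pabs_rat p (g n))) \<longlonglongrightarrow> max (qp_abs p x) (qp_abs p y)"
    unfolding f(2) g(2) by (intro tendsto_max abs_cls[OF assms(1)] f g)
  have le: "pabs_rat p (f n - g n) \<le> max (pabs_rat p (f n)) (pabs_rat p (g n))" for n
    using pabs_ultra[OF assms(1), of "f n" "- g n"] pabs_uminus[OF assms(1), of "g n"] by simp
  show ?thesis unfolding f(2) g(2) minus_cls[OF assms(1) f(1) g(1)]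
    by (rule LIMSEQ_le[OF abs_cls[OF assms(1) cauchy_diff[OF assms(1) f(1) g(1)]] L[unfolded f(2) g(2)]])
       (use le in auto)
qed

lemma add_minus: assumes "prime p" "x \<in> Qp p" "y \<in> Qp p"
  shows "qp_add p x (qp_minus p y x) = y"
proof -
  obtain f where f: "padic_cauchy p f" "x = qp_cls p f" using Qp_obtain assms by blast
  obtain g where g: "padic_cauchy p g" "y = qp_cls p g" using Qp_obtain assms by blast
  show ?thesis unfolding f(2) g(2)
    using minus_cls[OF assms(1) g(1) f(1)] add_cls[OF assms(1) f(1) cauchy_diff[OF assms(1) g(1) f(1)]]
    by simp
qed

lemma minus_add: assumes "prime p" "x \<in> Qp p" "y \<in> Qp p"
  shows "qp_minus p (qp_add p x y) x = y"
proof -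
  obtain f where f: "padic_cauchy p f" "x = qp_cls p f" using Qp_obtain assms by blast
  obtain g where g: "padic_cauchy p g" "y = qp_cls p g" using Qp_obtain assms by blast
  show ?thesis unfolding f(2) g(2)
    using add_cls[OF assms(1) f(1) g(1)] minus_cls[OF assms(1) cauchy_add[OF assms(1) f(1) g(1)] f(1)]
    by simp
qed

lemma minus_zero: assumes "prime p" "y \<in> Qp p"
  shows "qp_minus p y (qp_cls p (\<lambda>n. 0)) = y"
proof -
  obtain g where g: "padic_cauchy p g" "y = qp_cls p g" using Qp_obtain assms by blast
  show ?thesis unfolding g(2) using minus_cls[OF assms(1) g(1) cauchy_const] by simp
qed

lemma mult_zero_zero: "prime p \<Longrightarrow> qp_mult p (qp_cls p (\<lambda>n. 0)) (qp_cls p (\<lambda>n. 0)) = qp_cls p (\<lambda>n. 0)"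
  using mult_cls[OF _ cauchy_const cauchy_const, of p 0 0] by simp

lemma mult_inv: assumes "prime p" "y \<in> Qp p" "a \<noteq> 0"
  shows "qp_mult p (qp_cls p (\<lambda>n. a)) (qp_mult p (qp_cls p (\<lambda>n. inverse a)) y) = y"
proof -
  obtain g where g: "padic_cauchy p g" "y = qp_cls p g" using Qp_obtain assms by blast
  show ?thesis unfolding g(2)
    using mult_cls[OF assms(1) cauchy_const g(1), of "inverse a"]
      mult_cls[OF assms(1) cauchy_const cauchy_mult[OF assms(1) cauchy_const g(1)], of a "inverse a"]
      assms(3) by (simp add: mult.assoc[symmetric])
qed

lemma pabs_inv_ppow: assumes "prime p" shows "pabs_rat p (inverse (of_nat p ^ n)) = real p ^ n"
proof -
  have "p > 0" using assms prime_gt_0_nat by auto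
  hence "(of_nat p ^ n :: rat) \<noteq> 0" by simp
  hence "pabs_rat p (of_nat p ^ n) * pabs_rat p (inverse (of_nat p ^ n)) = 1"
    using pabs_mult[OF assms, symmetric] pabs_one[OF assms] by simp
  thus ?thesis using pabs_ppow[OF assms] \<open>p > 0\<close> by (simp add: field_simps)
qed



lemma qp_istop: "istopology (qp_open p)"
  unfolding istopology_def
proof (intro conjI allI impI)
  fix S T assume S: "qp_open p S" and T: "qp_open p T"
  show "qp_open p (S \<inter> T)" unfolding qp_open_def
  proof (intro conjI ballI)
    show "S \<inter> T \<subseteq> Qp p" using S unfolding qp_open_def by auto
    fix x assume x: "x \<in> S \<inter> T"
    obtain e1 where e1: "e1 > 0" "\<forall>y\<in>Qp p. qp_abs p (qp_minus p y x) < e1 \<longrightarrow> y \<in> S"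
      using S x unfolding qp_open_def by blast
    obtain e2 where e2: "e2 > 0" "\<forall>y\<in>Qp p. qp_abs p (qp_minus p y x) < e2 \<longrightarrow> y \<in> T"
      using T x unfolding qp_open_def by blast
    show "\<exists>e>0. \<forall>y\<in>Qp p. qp_abs p (qp_minus p y x) < e \<longrightarrow> y \<in> S \<inter> T"
      using e1 e2 by (intro exI[of _ "min e1 e2"]) auto
  qed
next
  fix K assume K: "\<forall>K\<in>K. qp_open p K"
  show "qp_open p (\<Union>K)" unfolding qp_open_def
  proof (intro conjI ballI)
    show "\<Union>K \<subseteq> Qp p" using K unfolding qp_open_def by auto
    fix x assume "x \<in> \<Union>K"
    then obtain k where k: "k \<in> K" "x \<in> k" by blast
    then obtain e where "e > 0" "\<forall>y\<in>Qp p. qp_abs p (qp_minus p y x) < e \<longrightarrow> y \<in> k"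
      using K unfolding qp_open_def by blast
    thus "\<exists>e>0. \<forall>y\<in>Qp p. qp_abs p (qp_minus p y x) < e \<longrightarrow> y \<in> \<Union>K" using k by blast
  qed
qed

lemma qp_openin: "openin (qp_topology p) = qp_open p"
  unfolding qp_topology_def using qp_istop by simp

lemma qp_topspace: "topspace (qp_topology p) = Qp p"
proof -
  have "qp_open p (Qp p)" unfolding qp_open_def by (auto intro: exI[of _ 1])
  thus ?thesis unfolding topspace_def qp_openin qp_open_def by auto
qed

lemma Zp_sub: "Zp p \<subseteq> Qp p" unfolding Zp_def by auto

lemma Zp_open: assumes "prime p" shows "qp_open p (Zp p)"
  unfolding qp_open_def
proof (intro conjI ballI)
  show "Zp p \<subseteq> Qp p" by (rule Zp_sub)
  fix x assume x: "x \<in> Zp p"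
  have "qp_abs p y \<le> 1" if y: "y \<in> Qp p" "qp_abs p (qp_minus p y x) < 1" for y
  proof -
    have xq: "x \<in> Qp p" "qp_abs p x \<le> 1" using x unfolding Zp_def by auto
    have "qp_abs p y = qp_abs p (qp_add p x (qp_minus p y x))" using add_minus[OF assms xq(1) y(1)] by simp
    also have "\<dots> \<le> max (qp_abs p x) (qp_abs p (qp_minus p y x))"
      by (rule abs_add[OF assms xq(1) minus_closed[OF assms y(1) xq(1)]])
    finally show ?thesis using xq y by simp
  qed
  thus "\<exists>e>0. \<forall>y\<in>Qp p. qp_abs p (qp_minus p y x) < e \<longrightarrow> y \<in> Zp p"
    unfolding Zp_def by (intro exI[of _ 1]) auto
qed

lemma topspace_Zp: "topspace (subtopology (qp_topology p) (Zp p)) = Zp p"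
  using Zp_sub qp_topspace by auto

lemma U0_open: assumes "prime p" shows "tau_open p {\<xi>\<in>QpX p. \<forall>i. qp_abs p (\<xi> i) \<le> 1}"
  unfolding tau_open_def
proof (intro conjI allI impI)
  fix P :: "'a set" assume P: "finite P"
  define X where "X = (\<lambda>i. if i \<in> P then qp_topology p else subtopology (qp_topology p) (Zp p))"
  have T: "{\<xi>\<in>QpX p. \<forall>i. qp_abs p (\<xi> i) \<le> 1} \<inter> {\<xi>. \<forall>j. j \<notin> P \<longrightarrow> \<xi> j \<in> Zp p} = {\<xi>. \<forall>i::'a. \<xi> i \<in> Zp p}"
  proof (rule set_eqI)
    fix \<xi> :: "'a \<Rightarrow> qp"
    show "\<xi> \<in> {\<xi>\<in>QpX p. \<forall>i. qp_abs p (\<xi> i) \<le> 1} \<inter> {\<xi>. \<forall>j. j \<notin> P \<longrightarrow> \<xi> j \<in> Zp p} \<longleftrightarrow> \<xi> \<in> {\<xi>. \<forall>i::'a. \<xi> i \<in> Zp p}"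
    proof
      assume "\<xi> \<in> {\<xi>\<in>QpX p. \<forall>i. qp_abs p (\<xi> i) \<le> 1} \<inter> {\<xi>. \<forall>j. j \<notin> P \<longrightarrow> \<xi> j \<in> Zp p}"
      thus "\<xi> \<in> {\<xi>. \<forall>i::'a. \<xi> i \<in> Zp p}" unfolding QpX_def Zp_def by blast
    next
      assume h: "\<xi> \<in> {\<xi>. \<forall>i::'a. \<xi> i \<in> Zp p}"
      hence h2: "\<forall>i. \<xi> i \<in> Qp p \<and> qp_abs p (\<xi> i) \<le> 1" unfolding Zp_def by blast
      hence e: "{i. qp_abs p (\<xi> i) > 1} = {}" by (simp add: not_less)
      have "\<xi> \<in> QpX p" unfolding QpX_def using h2 e by simp
      thus "\<xi> \<in> {\<xi>\<in>QpX p. \<forall>i. qp_abs p (\<xi> i) \<le> 1} \<inter> {\<xi>. \<forall>j. j \<notin> P \<longrightarrow> \<xi> j \<in> Zp p}"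
        using h h2 by blast
    qed
  qed
  have "openin (product_topology X UNIV) {\<xi>. \<forall>i::'a. \<xi> i \<in> Zp p}"
    unfolding openin_product_topology_alt
  proof (intro ballI)
    fix x assume x: "x \<in> {\<xi>. \<forall>i::'a. \<xi> i \<in> Zp p}"
    have "{i \<in> UNIV. Zp p \<noteq> topspace (X i)} \<subseteq> P" unfolding X_def using topspace_Zp by auto
    hence f1: "finite {i \<in> UNIV. Zp p \<noteq> topspace (X i)}" using P finite_subset by blast
    have f2: "\<forall>i\<in>UNIV. openin (X i) (Zp p)"
    proof
      fix i :: 'a
      show "openin (X i) (Zp p)"
      proof (cases "i \<in> P")
        case True then show ?thesis unfolding X_def using Zp_open[OF assms] by (simp add: qp_openin)
      next
        case False then show ?thesis unfolding X_def
          using openin_topspace[of "subtopology (qp_topology p) (Zp p)"] topspace_Zp[of p] by simp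
      qed
    qed
    have f3: "x \<in> Pi\<^sub>E UNIV (\<lambda>i. Zp p)" using x by (simp add: PiE_iff)
    have f4: "Pi\<^sub>E UNIV (\<lambda>i. Zp p) \<subseteq> {\<xi>. \<forall>i::'a. \<xi> i \<in> Zp p}" by (simp add: PiE_iff subset_iff)
    show "\<exists>U. finite {i \<in> UNIV. U i \<noteq> topspace (X i)} \<and> (\<forall>i\<in>UNIV. openin (X i) (U i)) \<and>
        x \<in> Pi\<^sub>E UNIV U \<and> Pi\<^sub>E UNIV U \<subseteq> {\<xi>. \<forall>i::'a. \<xi> i \<in> Zp p}"
      apply (rule exI[of _ "\<lambda>i. Zp p"])
      using f1 f2 f3 f4 by simp
  qed
  thus "openin (product_topology (\<lambda>i. if i \<in> P then qp_topology p else subtopology (qp_topology p) (Zp p)) UNIV)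
          ({\<xi>\<in>QpX p. \<forall>i. qp_abs p (\<xi> i) \<le> 1} \<inter> {\<xi>. \<forall>j. j \<notin> P \<longrightarrow> \<xi> j \<in> Zp p})"
    unfolding T X_def .
qed blast



lemma QpX_bdd: assumes "\<xi> \<in> QpX p" shows "bdd_above (range (\<lambda>i. qp_abs p (\<xi> i)))"
proof -
  define F where "F = {i. qp_abs p (\<xi> i) > 1}"
  have fin: "finite F" using assms unfolding QpX_def F_def by blast
  define B where "B = Max (insert 1 ((\<lambda>i. qp_abs p (\<xi> i)) ` F))"
  have "qp_abs p (\<xi> i) \<le> B" for i
  proof (cases "i \<in> F")
    case True then show ?thesis unfolding B_def using fin by (intro Max_ge) auto
  next
    case False
    hence "qp_abs p (\<xi> i) \<le> 1" unfolding F_def by simp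
    also have "1 \<le> B" unfolding B_def using fin by (intro Max_ge) auto
    finally show ?thesis .
  qed
  thus ?thesis by (intro bdd_aboveI2)
qed

lemma norm_upper: "\<xi> \<in> QpX p \<Longrightarrow> qp_abs p (\<xi> i) \<le> qpX_norm p \<xi>"
  unfolding qpX_norm_def by (rule cSup_upper) (auto simp: QpX_bdd)

lemma norm_least: "(\<And>i. qp_abs p (\<xi> i) \<le> B) \<Longrightarrow> qpX_norm p \<xi> \<le> B"
  unfolding qpX_norm_def by (rule cSup_least) auto

lemma nbhd:
  fixes A :: "('x \<Rightarrow> qp) \<Rightarrow> ('x \<Rightarrow> qp)"
  assumes pp: "prime p" and lin: "Zp_linear p A" and cont: "tau_continuous p A"
  shows "\<exists>\<delta>>0. \<delta> \<le> 1 \<and> (\<forall>\<zeta>\<in>QpX p. (\<forall>i. qp_abs p (\<zeta> i) < \<delta>) \<longrightarrow> (\<forall>i. qp_abs p (A \<zeta> i) \<le> 1))"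
proof -
  define z0 where "z0 = qp_cls p (\<lambda>n. 0)"
  have z0Q: "z0 \<in> Qp p" unfolding z0_def by (rule cls_in_Qp[OF cauchy_const])
  have z0abs: "qp_abs p z0 = 0" unfolding z0_def using abs_const[OF pp, of 0] by simp
  have z0Z: "z0 \<in> Zp p" unfolding Zp_def using z0Q z0abs by simp
  define z where "z = (\<lambda>i::'x. z0)"
  have zX: "z \<in> QpX p" unfolding QpX_def z_def using z0Q z0abs by simp
  have sz: "qpX_smult p z0 z = z" unfolding qpX_smult_def z_def z0_def using mult_zero_zero[OF pp] by simp
  have "A (qpX_smult p z0 z) = qpX_smult p z0 (A z)" using lin z0Z zX unfolding Zp_linear_def by blast
  hence Az: "A z = qpX_smult p z0 (A z)" using sz by simp
  have AzX: "A z \<in> QpX p" using lin zX unfolding Zp_linear_def by blast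
  have Az1: "\<forall>i. qp_abs p (A z i) \<le> 1"
  proof
    fix i
    have eq: "A z i = qp_mult p z0 (A z i)" using fun_cong[OF Az, of i] unfolding qpX_smult_def .
    have "A z i \<in> Qp p" using AzX unfolding QpX_def by blast
    have "qp_abs p (A z i) = qp_abs p (qp_mult p z0 (A z i))" using eq by (rule arg_cong)
    also have "\<dots> = 0" using abs_mult[OF pp z0Q \<open>A z i \<in> Qp p\<close>] z0abs by simp
    finally show "qp_abs p (A z i) \<le> 1" by simp
  qed
  define U0 where "U0 = {\<xi>\<in>QpX p. \<forall>i. qp_abs p ((\<xi>::'x \<Rightarrow> qp) i) \<le> 1}"
  define S where "S = {\<xi>\<in>QpX p. A \<xi> \<in> U0}"
  have "tau_open p U0" unfolding U0_def by (rule U0_open[OF pp])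
  moreover have "\<forall>U. tau_open p U \<longrightarrow> tau_open p {\<xi> \<in> QpX p. A \<xi> \<in> U}"
    using cont unfolding tau_continuous_def by (rule conjunct2)
  ultimately have "tau_open p S" unfolding S_def by blast
  hence "\<forall>P. finite P \<longrightarrow> openin (product_topology (\<lambda>i. if i \<in> P then qp_topology p else subtopology (qp_topology p) (Zp p)) UNIV)
               (S \<inter> {\<xi>. \<forall>j. j \<notin> P \<longrightarrow> \<xi> j \<in> Zp p})" unfolding tau_open_def by (rule conjunct2)
  from this[rule_format, of "{}"]
  have op: "openin (product_topology (\<lambda>i. subtopology (qp_topology p) (Zp p)) UNIV) (S \<inter> {\<xi>. \<forall>j. \<xi> j \<in> Zp p})" by simp
  have "z \<in> S" unfolding S_def U0_def using zX AzX Az1 by simp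
  moreover have "z \<in> {\<xi>. \<forall>j. \<xi> j \<in> Zp p}" using z0Z unfolding z_def by simp
  ultimately have zin: "z \<in> S \<inter> {\<xi>. \<forall>j. \<xi> j \<in> Zp p}" by (rule IntI)
  have exU: "\<exists>U. finite {i \<in> UNIV. U i \<noteq> topspace (subtopology (qp_topology p) (Zp p))} \<and>
      (\<forall>i\<in>UNIV. openin (subtopology (qp_topology p) (Zp p)) (U i)) \<and> z \<in> Pi\<^sub>E UNIV U \<and>
      Pi\<^sub>E UNIV U \<subseteq> S \<inter> {\<xi>. \<forall>j. \<xi> j \<in> Zp p}"
    by (rule bspec[OF op[unfolded openin_product_topology_alt] zin])
  obtain U where U: "finite {i \<in> UNIV. U i \<noteq> topspace (subtopology (qp_topology p) (Zp p))}"
      "\<forall>i\<in>UNIV. openin (subtopology (qp_topology p) (Zp p)) (U i)" "z \<in> Pi\<^sub>E UNIV U"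
      "Pi\<^sub>E UNIV U \<subseteq> S \<inter> {\<xi>. \<forall>j. \<xi> j \<in> Zp p}"
    using exU by (elim exE conjE) blast
  define F where "F = {i. U i \<noteq> Zp p}"
  have finF: "finite F" using U(1) unfolding F_def topspace_Zp by simp
  have ball: "\<exists>e>0. \<forall>y\<in>Zp p. qp_abs p y < e \<longrightarrow> y \<in> U i" for i
  proof -
    obtain V where V: "qp_open p V" "U i = V \<inter> Zp p" using U(2) unfolding openin_subtopology qp_openin by blast
    have "z0 \<in> U i" using U(3) unfolding z_def by (simp add: PiE_iff)
    hence "z0 \<in> V" using V by blast
    then obtain e where e: "e > 0" "\<forall>y\<in>Qp p. qp_abs p (qp_minus p y z0) < e \<longrightarrow> y \<in> V"
      using V(1) unfolding qp_open_def by blast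
    show ?thesis
    proof (intro exI[of _ e] conjI ballI impI)
      show "e > 0" by fact
      fix y assume y: "y \<in> Zp p" "qp_abs p y < e"
      have yQ: "y \<in> Qp p" using y Zp_sub by blast
      hence "qp_minus p y z0 = y" unfolding z0_def by (rule minus_zero[OF pp])
      hence "y \<in> V" using e y yQ by simp
      thus "y \<in> U i" using V y by blast
    qed
  qed
  hence "\<forall>i. \<exists>e. e > 0 \<and> (\<forall>y\<in>Zp p. qp_abs p y < e \<longrightarrow> y \<in> U i)" by blast
  then obtain E where E: "\<forall>i. E i > 0 \<and> (\<forall>y\<in>Zp p. qp_abs p y < E i \<longrightarrow> y \<in> U i)"
    using choice[of "\<lambda>i e. e > 0 \<and> (\<forall>y\<in>Zp p. qp_abs p y < e \<longrightarrow> y \<in> U i)"] by blast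
  define \<delta> where "\<delta> = Min (insert 1 (E ` F))"
  have \<delta>pos: "\<delta> > 0" unfolding \<delta>_def using finF E by simp
  have \<delta>1: "\<delta> \<le> 1" unfolding \<delta>_def using finF by simp
  have \<delta>E: "i \<in> F \<Longrightarrow> \<delta> \<le> E i" for i unfolding \<delta>_def using finF by simp
  show ?thesis
  proof (intro exI[of _ \<delta>] conjI ballI impI allI)
    show "\<delta> > 0" "\<delta> \<le> 1" by fact+
    fix \<zeta> :: "'x \<Rightarrow> qp" and i :: 'x assume \<zeta>: "\<zeta> \<in> QpX p" "\<forall>i. qp_abs p (\<zeta> i) < \<delta>"
    have "\<zeta> j \<in> U j" for j :: 'x
    proof -
      have Z: "\<zeta> j \<in> Zp p" using \<zeta> \<delta>1 unfolding QpX_def Zp_def by (metis (mono_tags, lifting) mem_Collect_eq order.strict_implies_order order_trans)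
      show ?thesis
      proof (cases "j \<in> F")
        case True
        then show ?thesis using E Z \<zeta>(2) \<delta>E[OF True] by (meson order_less_le_trans)
      next
        case False then show ?thesis using Z unfolding F_def by simp
      qed
    qed
    hence "\<zeta> \<in> Pi\<^sub>E UNIV U" by (simp add: PiE_iff)
    hence "\<zeta> \<in> S" using U(4) by blast
    thus "qp_abs p (A \<zeta> i) \<le> 1" unfolding S_def U0_def by blast
  qed
qed



theorem lemma2p15:
  fixes p :: nat and A :: "('x::countable \<Rightarrow> qp) \<Rightarrow> ('x \<Rightarrow> qp)"
  assumes "prime p"
    and "Zp_linear p A"
    and "tau_continuous p A"
  shows "norm_continuous p A"
proof -
  note pp = assms(1) and lin = assms(2)
  obtain \<delta> where \<delta>: "\<delta> > 0" "\<delta> \<le> 1"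
    "\<forall>\<zeta>\<in>QpX p. (\<forall>i. qp_abs p (\<zeta> i) < \<delta>) \<longrightarrow> (\<forall>i. qp_abs p (A \<zeta> i) \<le> 1)"
    using nbhd[OF assms] by blast
  have p1: "real p > 1" using prime_gt_1_nat[OF pp] by simp
  have linX: "\<forall>\<xi>\<in>QpX p. A \<xi> \<in> QpX p" using lin unfolding Zp_linear_def by blast
  have linadd: "\<forall>\<xi>\<in>QpX p. \<forall>\<eta>\<in>QpX p. A (qpX_add p \<xi> \<eta>) = qpX_add p (A \<xi>) (A \<eta>)"
    using lin unfolding Zp_linear_def by blast
  have linsm: "\<forall>c\<in>Zp p. \<forall>\<xi>\<in>QpX p. A (qpX_smult p c \<xi>) = qpX_smult p c (A \<xi>)"
    using lin unfolding Zp_linear_def by blast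
  have QpXQ: "\<xi> \<in> QpX p \<Longrightarrow> \<xi> i \<in> Qp p" for \<xi> :: "'x \<Rightarrow> qp" and i unfolding QpX_def by blast
  have arch: "\<exists>n. inverse (real p ^ n) < y" if ypos: "y > 0" for y
  proof -
    have "inverse (real p) < 1" using p1 by (simp add: inverse_less_1_iff)
    then obtain n where "inverse (real p) ^ n < y" using real_arch_pow_inv[OF ypos] by blast
    thus ?thesis by (metis power_inverse)
  qed
  show ?thesis unfolding norm_continuous_def
  proof (intro ballI allI impI)
    fix \<xi> :: "'x \<Rightarrow> qp" and e :: real
    assume \<xi>: "\<xi> \<in> QpX p" and e: "e > 0"
    obtain n where n: "inverse (real p ^ n) < e" using arch[OF e] by blast
    obtain m where m: "inverse (real p ^ m) < \<delta>" using arch[OF \<delta>(1)] by blast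
    define d where "d = inverse (real p ^ (m + n))"
    have dpos: "d > 0" unfolding d_def using p1 by simp
    show "\<exists>d>0. \<forall>\<eta>\<in>QpX p. qpX_norm p (qpX_minus p \<eta> \<xi>) < d \<longrightarrow> qpX_norm p (qpX_minus p (A \<eta>) (A \<xi>)) < e"
    proof (intro exI[of _ d] conjI ballI impI)
      show "d > 0" by (rule dpos)
      fix \<eta> assume \<eta>: "\<eta> \<in> QpX p" and dn: "qpX_norm p (qpX_minus p \<eta> \<xi>) < d"
      define \<zeta> where "\<zeta> = qpX_minus p \<eta> \<xi>"
      have \<zeta>Q: "\<zeta> i \<in> Qp p" for i unfolding \<zeta>_def qpX_minus_def
        by (rule minus_closed[OF pp QpXQ[OF \<eta>] QpXQ[OF \<xi>]])
      have \<zeta>le: "qp_abs p (\<zeta> i) \<le> max (qp_abs p (\<eta> i)) (qp_abs p (\<xi> i))" for i unfolding \<zeta>_def qpX_minus_def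
        by (rule abs_minus[OF pp QpXQ[OF \<eta>] QpXQ[OF \<xi>]])
      have "{i. qp_abs p (\<zeta> i) > 1} \<subseteq> {i. qp_abs p (\<eta> i) > 1} \<union> {i. qp_abs p (\<xi> i) > 1}"
      proof
        fix i assume "i \<in> {i. qp_abs p (\<zeta> i) > 1}"
        hence "1 < max (qp_abs p (\<eta> i)) (qp_abs p (\<xi> i))" using \<zeta>le[of i] by simp
        thus "i \<in> {i. qp_abs p (\<eta> i) > 1} \<union> {i. qp_abs p (\<xi> i) > 1}" by (simp add: less_max_iff_disj)
      qed
      moreover have "finite ({i. qp_abs p (\<eta> i) > 1} \<union> {i. qp_abs p (\<xi> i) > 1})"
        using \<eta> \<xi> unfolding QpX_def by simp
      ultimately have \<zeta>X: "\<zeta> \<in> QpX p" unfolding QpX_def using \<zeta>Q finite_subset by blast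
      have \<zeta>small: "qp_abs p (\<zeta> i) < d" for i
        using norm_upper[OF \<zeta>X, of i] dn unfolding \<zeta>_def by simp
      define a where "a = (of_nat p ^ n :: rat)"
      have a0: "a \<noteq> 0" unfolding a_def using p1 by simp
      define s where "s = qp_cls p (\<lambda>k. a)"
      define t where "t = qp_cls p (\<lambda>k. inverse a)"
      have sQ: "s \<in> Qp p" unfolding s_def by (rule cls_in_Qp[OF cauchy_const])
      have tQ: "t \<in> Qp p" unfolding t_def by (rule cls_in_Qp[OF cauchy_const])
      have sabs: "qp_abs p s = inverse (real p ^ n)" unfolding s_def a_def
        using abs_const[OF pp] pabs_ppow[OF pp] by simp
      have tabs: "qp_abs p t = real p ^ n" unfolding t_def a_def
        using abs_const[OF pp] pabs_inv_ppow[OF pp] by simp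
      have pn1: "real p ^ n \<ge> 1" using one_le_power[of "real p" n] p1 by linarith
      have "inverse (real p ^ n) \<le> 1" using pn1 by (simp add: inverse_le_1_iff)
      hence sZ: "s \<in> Zp p" unfolding Zp_def using sQ sabs by simp
      define \<zeta>' where "\<zeta>' = qpX_smult p t \<zeta>"
      have \<zeta>'Q: "\<zeta>' i \<in> Qp p" for i unfolding \<zeta>'_def qpX_smult_def by (rule mult_closed[OF pp tQ \<zeta>Q])
      have \<zeta>'small: "qp_abs p (\<zeta>' i) < \<delta>" for i
      proof -
        have "qp_abs p (\<zeta>' i) = real p ^ n * qp_abs p (\<zeta> i)"
          unfolding \<zeta>'_def qpX_smult_def using abs_mult[OF pp tQ \<zeta>Q] tabs by simp
        also have "\<dots> < real p ^ n * d" using \<zeta>small[of i] p1 by simp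
        also have "real p ^ n * d = inverse (real p ^ m)" unfolding d_def using p1
          by (simp add: power_add field_simps)
        finally show ?thesis using m by simp
      qed
      have "\<not> 1 < qp_abs p (\<zeta>' i)" for i using \<zeta>'small[of i] \<delta>(2) by linarith
      hence "{i. qp_abs p (\<zeta>' i) > 1} = {}" by simp
      hence \<zeta>'X: "\<zeta>' \<in> QpX p" unfolding QpX_def using \<zeta>'Q by simp
      have A1: "qp_abs p (A \<zeta>' i) \<le> 1" for i using \<delta>(3) \<zeta>'X \<zeta>'small by blast
      have \<zeta>eq: "qpX_smult p s \<zeta>' = \<zeta>"
        unfolding qpX_smult_def \<zeta>'_def s_def t_def using mult_inv[OF pp \<zeta>Q a0] by simp
      have "A (qpX_smult p s \<zeta>') = qpX_smult p s (A \<zeta>')" using linsm sZ \<zeta>'X by blast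
      hence A\<zeta>: "A \<zeta> = qpX_smult p s (A \<zeta>')" unfolding \<zeta>eq .
      have A\<zeta>'X: "A \<zeta>' \<in> QpX p" using linX \<zeta>'X by blast
      have A\<zeta>X: "A \<zeta> \<in> QpX p" using linX \<zeta>X by blast
      have A\<zeta>B: "qp_abs p (A \<zeta> i) \<le> inverse (real p ^ n)" for i
      proof -
        have "qp_abs p (A \<zeta> i) = qp_abs p s * qp_abs p (A \<zeta>' i)"
          unfolding A\<zeta> qpX_smult_def by (rule abs_mult[OF pp sQ QpXQ[OF A\<zeta>'X]])
        also have "\<dots> \<le> inverse (real p ^ n) * 1" unfolding sabs
          using A1[of i] p1 by (intro mult_left_mono) auto
        finally show ?thesis by simp
      qed
      have \<eta>eq: "qpX_add p \<xi> \<zeta> = \<eta>"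
        unfolding qpX_add_def \<zeta>_def qpX_minus_def using add_minus[OF pp QpXQ[OF \<xi>] QpXQ[OF \<eta>]] by simp
      have "A (qpX_add p \<xi> \<zeta>) = qpX_add p (A \<xi>) (A \<zeta>)" using linadd \<xi> \<zeta>X by blast
      hence A\<eta>: "A \<eta> = qpX_add p (A \<xi>) (A \<zeta>)" unfolding \<eta>eq .
      have "qpX_minus p (A \<eta>) (A \<xi>) = A \<zeta>"
        unfolding A\<eta> qpX_minus_def qpX_add_def
        using minus_add[OF pp QpXQ[OF linX[rule_format, OF \<xi>]] QpXQ[OF A\<zeta>X]] by simp
      hence "qpX_norm p (qpX_minus p (A \<eta>) (A \<xi>)) \<le> inverse (real p ^ n)"
        using norm_least[of p "A \<zeta>", OF A\<zeta>B] by simp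
      thus "qpX_norm p (qpX_minus p (A \<eta>) (A \<xi>)) < e" using n by simp
    qed
  qed
qed

end
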